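(* Let $A,B:(0,\infty)\to(0,\infty)$ be the functions $A=\tfrac r3\sqrt{1-r^{-3}}$, $B=\tfrac r{\sqrt3}$, where $r=r(t)\in(1,\infty)$ is determined by $\dot A=\tfrac12(1-A^2/B^2)$, $\dot B=A/B$ with $r\to1$ as $t\to0$. For the ODE system $$\dot f_+=\frac{f_+}{A}\Bigl(1-\frac{A^2}{B^2}-f_+\Bigr)+f_-^2\frac{A}{B^2},\qquad \dot f_-=\frac{2f_-}{A}(f_+-1),$$ the following subsets of $\mathbb{R}^2$ are forward-invariant (for $t>0$): (i) $H_\pm=\{(f_+,f_-):\pm f_->0\}$; (ii) $\mathcal{R}_\infty=\{(f_+,f_-): f_+>1,\ f_->1\}$; (iii) $\mathcal{R}_0=\{(f_+,f_-):\tfrac23<f_+<1,\ 0<f_-<1\}$.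
   Context: $A$ and $B$ are the metric coefficients of the Bryant–Salamon $G_2$-metric $dt^2+A^2\sum(e_i^+)^2+B^2\sum(e_i^-)^2$ on $\mathbf{S}(S^3)$, and the system is the $\mathrm{SU}(2)^3$-invariant $G_2$-instanton equation for $\mathrm{SU}(2)$-connections $f_+\sum_iE_i\otimes e_i^++f_-\sum_iE_i\otimes e_i^-$. *)

theory Defs
  imports "HOL-Analysis.Analysis"
begin

definition coefA :: "(real \<Rightarrow> real) \<Rightarrow> real \<Rightarrow> real" where
  "coefA r t = r t / 3 * sqrt (1 - 1 / (r t) ^ 3)"

definition coefB :: "(real \<Rightarrow> real) \<Rightarrow> real \<Rightarrow> real" where
  "coefB r t = r t / sqrt 3"

definition instanton_solution ::
  "(real \<Rightarrow> real) \<Rightarrow> real set \<Rightarrow> (real \<Rightarrow> real) \<Rightarrow> (real \<Rightarrow> real) \<Rightarrow> bool" where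
  "instanton_solution r I fp fm \<longleftrightarrow>
     is_interval I \<and> I \<subseteq> {0<..} \<and>
     (\<forall>t\<in>I. (fp has_real_derivative
                 (fp t / coefA r t * (1 - (coefA r t)^2 / (coefB r t)^2 - fp t)
                  + (fm t)^2 * coefA r t / (coefB r t)^2)) (at t within I)) \<and>
     (\<forall>t\<in>I. (fm has_real_derivative
                 (2 * fm t / coefA r t * (fp t - 1))) (at t within I))"

definition forward_invariant :: "(real \<Rightarrow> real) \<Rightarrow> (real \<times> real) set \<Rightarrow> bool" where
  "forward_invariant r S \<longleftrightarrow>
     (\<forall>I fp fm t0 t. instanton_solution r I fp fm \<longrightarrow> t0 \<in> I \<longrightarrow> t \<in> I \<longrightarrow> t0 \<le> t \<longrightarrow>
        (fp t0, fm t0) \<in> S \<longrightarrow> (fp t, fm t) \<in> S)"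

definition H_plus :: "(real \<times> real) set" where
  "H_plus = {(fp, fm). fm > 0}"

definition H_minus :: "(real \<times> real) set" where
  "H_minus = {(fp, fm). fm < 0}"

definition R_infty :: "(real \<times> real) set" where
  "R_infty = {(fp, fm). fp > 1 \<and> fm > 1}"

definition R_zero :: "(real \<times> real) set" where
  "R_zero = {(fp, fm). 2/3 < fp \<and> fp < 1 \<and> 0 < fm \<and> fm < 1}"

end

theory Submission imports Defs begin
lemma grow:
  fixes h g :: "real \<Rightarrow> real" and a b :: real
  assumes ab: "a \<le> b" and ch: "continuous_on {a..b} h" and cg: "continuous_on {a..b} g"
    and der: "\<And>t. a < t \<Longrightarrow> t < b \<Longrightarrow> \<exists>d. (h has_real_derivative d) (at t) \<and> d \<ge> g t * h t"
    and nn: "\<And>t. a < t \<Longrightarrow> t < b \<Longrightarrow> h t \<ge> 0"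
    and ha: "h a > 0"
  shows "h b > 0"
proof -
  have "compact (g ` {a..b})" by (rule compact_continuous_image[OF cg compact_Icc])
  then obtain M where M: "\<And>t. t \<in> {a..b} \<Longrightarrow> norm (g t) \<le> M"
    using compact_imp_bounded bounded_iff by (metis image_eqI)
  define phi where "phi t = h t * exp (M * t)" for t
  have "phi a \<le> phi b"
  proof (rule DERIV_nonneg_imp_increasing_open[OF ab])
    fix t assume t: "a < t" "t < b"
    obtain d where d: "(h has_real_derivative d) (at t)" "d \<ge> g t * h t" using der[OF t] by blast
    have D: "(phi has_real_derivative (d * exp (M*t) + h t * (M * exp (M*t)))) (at t)"
      unfolding phi_def[abs_def]
      by (auto intro!: derivative_eq_intros d(1))
    have "g t \<ge> - M" using M[of t] t by auto
    hence "g t * h t \<ge> - M * h t" using nn[OF t] mult_right_mono[of "-M" "g t" "h t"] by simp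
    hence "d + M * h t \<ge> 0" using d(2) by linarith
    hence "(d + M * h t) * exp (M*t) \<ge> 0" by simp
    thus "\<exists>y. (phi has_real_derivative y) (at t) \<and> 0 \<le> y" using D
      by (metis distrib_right mult.assoc mult.left_commute)
  next
    show "continuous_on {a..b} phi" unfolding phi_def[abs_def]
      by (intro continuous_intros ch)
  qed
  hence "h b * exp (M*b) > 0" using ha unfolding phi_def
    by (smt (verit) exp_gt_zero mult_pos_pos)
  thus ?thesis by (simp add: zero_less_mult_iff)
qed

lemma barrier:
  fixes K :: "(real \<Rightarrow> real) set" and a b :: real
  assumes ab: "a \<le> b" and fin: "finite K"
    and cont: "\<And>k. k \<in> K \<Longrightarrow> continuous_on {a..b} k"
    and start: "\<And>k. k \<in> K \<Longrightarrow> k a > 0"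
    and step: "\<And>k. k \<in> K \<Longrightarrow> \<exists>g. continuous_on {a..b} g \<and>
        (\<forall>t. a < t \<longrightarrow> t < b \<longrightarrow> (\<forall>j\<in>K. j t > 0) \<longrightarrow>
            (\<exists>d. (k has_real_derivative d) (at t) \<and> d \<ge> g t * k t))"
  shows "\<forall>k\<in>K. k b > 0"
proof (rule ccontr)
  assume "\<not> ?thesis"
  then obtain k0 where k0: "k0 \<in> K" "k0 b \<le> 0" by force
  define S where "S = (\<Union>k\<in>K. {a..b} \<inter> k -` {..0})"
  have cS: "closed S" unfolding S_def
    using fin cont by (intro closed_UN) (auto intro: continuous_closed_preimage)
  have bS: "b \<in> S" unfolding S_def using k0 ab by auto
  have bdd: "bdd_below S" unfolding S_def by (rule bdd_belowI[of _ a]) auto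
  define s where "s = Inf S"
  have sS: "s \<in> S" unfolding s_def using closed_contains_Inf[OF _ bdd cS] bS by auto
  have sb: "s \<le> b" unfolding s_def using cInf_lower[OF bS bdd] .
  have as: "a \<le> s" using sS unfolding S_def by auto
  have pos: "\<forall>j\<in>K. j t > 0" if "a \<le> t" "t < s" for t
  proof (rule ccontr)
    assume "\<not> ?thesis"
    then obtain j where "j \<in> K" "j t \<le> 0" by force
    hence "t \<in> S" unfolding S_def using that sb by auto
    hence "s \<le> t" unfolding s_def using bdd by (rule cInf_lower)
    thus False using that by simp
  qed
  have "k s > 0" if kK: "k \<in> K" for k
  proof -
    obtain g where g: "continuous_on {a..b} g"
      "\<forall>t. a < t \<longrightarrow> t < b \<longrightarrow> (\<forall>j\<in>K. j t > 0) \<longrightarrow>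
            (\<exists>d. (k has_real_derivative d) (at t) \<and> d \<ge> g t * k t)" using step[OF kK] by blast
    show ?thesis
    proof (rule grow[OF as])
      show "continuous_on {a..s} k" using cont[OF kK] by (rule continuous_on_subset) (use sb in auto)
      show "continuous_on {a..s} g" using g(1) by (rule continuous_on_subset) (use sb in auto)
      show "\<exists>d. (k has_real_derivative d) (at t) \<and> d \<ge> g t * k t" if "a < t" "t < s" for t
        using g(2) pos[of t] that sb by auto
      show "k t \<ge> 0" if "a < t" "t < s" for t using pos[of t] that kK by force
      show "k a > 0" using start[OF kK] .
    qed
  qed
  thus False using sS unfolding S_def by force
qed


lemma coef_facts:
  assumes "r t > 1"
  shows "coefA r t > 0" "coefB r t > 0" "(coefA r t)^2 / (coefB r t)^2 \<ge> 0"
        "(coefA r t)^2 / (coefB r t)^2 < 1/3"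
        "(coefA r t) / (coefB r t)^2 = ((coefA r t)^2 / (coefB r t)^2) / coefA r t"
proof -
  have r3: "r t ^ 3 > 1" using assms by (simp add: one_less_power)
  have q: "0 < 1 / r t ^ 3" "1 / r t ^ 3 < 1" using r3 assms by (simp_all add: divide_less_eq)
  show A: "coefA r t > 0" unfolding coefA_def using assms q by auto
  show B: "coefB r t > 0" unfolding coefB_def using assms by auto
  show "(coefA r t)^2 / (coefB r t)^2 \<ge> 0" by simp
  have "(coefA r t)^2 = (r t)^2 / 9 * (1 - 1 / r t ^ 3)"
    unfolding coefA_def using q by (simp add: power_mult_distrib power_divide)
  moreover have "(coefB r t)^2 = (r t)^2 / 3"
    unfolding coefB_def by (simp add: power_divide)
  ultimately have "(coefA r t)^2 / (coefB r t)^2 = ((r t)^2 / 9 * (1 - 1 / r t ^ 3)) / ((r t)^2 / 3)"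
    by (simp only:)
  also have "\<dots> = (1 - 1 / r t ^ 3) / 3" using assms by (simp add: field_simps)
  finally have "(coefA r t)^2 / (coefB r t)^2 = (1 - 1 / r t ^ 3) / 3" .
  thus "(coefA r t)^2 / (coefB r t)^2 < 1/3" using q by simp
  show "(coefA r t) / (coefB r t)^2 = ((coefA r t)^2 / (coefB r t)^2) / coefA r t"
    using A B by (simp add: field_simps power2_eq_square)
qed

lemma L_inf1: fixes X Y al Aa :: real assumes "Aa > 0" "al \<ge> 0" "Y^2 \<ge> 1"
  shows "X/Aa*(1-al-X) + Y^2*al/Aa \<ge> (-(X+al)/Aa)*(X-1)"
proof -
  have "X/Aa*(1-al-X) + Y^2*al/Aa - (-(X+al)/Aa)*(X-1) = al*(Y^2-1)/Aa"
    using assms by (simp add: field_simps)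
  moreover have "al*(Y^2-1)/Aa \<ge> 0" using assms by simp
  ultimately show ?thesis by (metis diff_ge_0_iff_ge)
qed
lemma L_z: fixes X Y al Aa :: real assumes "Aa > 0" "al \<ge> 0" "al \<le> 1/3"
  shows "X/Aa*(1-al-X) + Y^2*al/Aa \<ge> ((1/3-al-X)/Aa)*(X-2/3)"
proof -
  have "X/Aa*(1-al-X) + Y^2*al/Aa - ((1/3-al-X)/Aa)*(X-2/3) = (2/3*(1/3-al) + al*Y^2)/Aa"
    using assms by (simp add: field_simps)
  moreover have "(2/3*(1/3-al) + al*Y^2)/Aa \<ge> 0" using assms by simp
  ultimately show ?thesis by (metis diff_ge_0_iff_ge)
qed
lemma L_w: fixes X Y al Aa :: real assumes "Aa > 0" "al \<ge> 0" "Y^2 \<le> 1"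
  shows "-(X/Aa*(1-al-X) + Y^2*al/Aa) \<ge> ((-X-al)/Aa)*(1-X)"
proof -
  have "-(X/Aa*(1-al-X) + Y^2*al/Aa) - ((-X-al)/Aa)*(1-X) = al*(1-Y^2)/Aa"
    using assms by (simp add: field_simps)
  moreover have "al*(1-Y^2)/Aa \<ge> 0" using assms by simp
  ultimately show ?thesis by (metis diff_ge_0_iff_ge)
qed
lemma setup_facts:
  assumes r_gt1: "\<forall>t>0. r t > 1"
    and dA: "\<forall>t>0. ((coefA r) has_real_derivative
                 (1/2 * (1 - (coefA r t)^2 / (coefB r t)^2))) (at t)"
    and dB: "\<forall>t>0. ((coefB r) has_real_derivative (coefA r t / coefB r t)) (at t)"
    and sol: "instanton_solution r I fp fm"
    and t0: "t0 \<in> I" and t1: "t1 \<in> I"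
  shows "continuous_on {t0..t1} fp" "continuous_on {t0..t1} fm"
    "continuous_on {t0..t1} (coefA r)" "continuous_on {t0..t1} (coefB r)"
    "\<And>t. t \<in> {t0..t1} \<Longrightarrow> r t > 1"
    "\<And>t. t0 < t \<Longrightarrow> t < t1 \<Longrightarrow> (fp has_real_derivative
                 (fp t / coefA r t * (1 - (coefA r t)^2 / (coefB r t)^2 - fp t)
                  + (fm t)^2 * coefA r t / (coefB r t)^2)) (at t)"
    "\<And>t. t0 < t \<Longrightarrow> t < t1 \<Longrightarrow> (fm has_real_derivative
                 (2 * fm t / coefA r t * (fp t - 1))) (at t)"
proof -
  have iv: "is_interval I" and Ipos: "I \<subseteq> {0<..}" using sol unfolding instanton_solution_def by auto
  have ivI: "\<forall>a\<in>I. \<forall>b\<in>I. \<forall>x. a \<le> x \<and> x \<le> b \<longrightarrow> x \<in> I"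
    using iv by (simp only: is_interval_1)
  have sub: "{t0..t1} \<subseteq> I"
  proof
    fix x assume "x \<in> {t0..t1}" hence "t0 \<le> x \<and> x \<le> t1" by simp
    thus "x \<in> I" by (rule ivI[rule_format, OF t0 t1])
  qed
  have pos: "{t0..t1} \<subseteq> {0<..}" using sub Ipos by auto
  have dp: "\<forall>t\<in>I. (fp has_real_derivative
                 (fp t / coefA r t * (1 - (coefA r t)^2 / (coefB r t)^2 - fp t)
                  + (fm t)^2 * coefA r t / (coefB r t)^2)) (at t within I)"
   and dm: "\<forall>t\<in>I. (fm has_real_derivative
                 (2 * fm t / coefA r t * (fp t - 1))) (at t within I)"
    using sol unfolding instanton_solution_def by auto
  have "continuous_on I fp" unfolding continuous_on_eq_continuous_within
  proof
    fix t assume "t \<in> I" thus "continuous (at t within I) fp" using dp by (blast intro: DERIV_continuous)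
  qed
  thus "continuous_on {t0..t1} fp" using sub continuous_on_subset by blast
  have "continuous_on I fm" unfolding continuous_on_eq_continuous_within
  proof
    fix t assume "t \<in> I" thus "continuous (at t within I) fm" using dm by (blast intro: DERIV_continuous)
  qed
  thus "continuous_on {t0..t1} fm" using sub continuous_on_subset by blast
  have "continuous_on {0<..} (coefA r)" unfolding continuous_on_eq_continuous_within
  proof
    fix t :: real assume "t \<in> {0<..}" hence "t > 0" by simp
    thus "continuous (at t within {0<..}) (coefA r)" using dA
      by (blast intro: DERIV_continuous continuous_at_imp_continuous_at_within)
  qed
  thus "continuous_on {t0..t1} (coefA r)" using pos continuous_on_subset by blast
  have "continuous_on {0<..} (coefB r)" unfolding continuous_on_eq_continuous_within
  proof
    fix t :: real assume "t \<in> {0<..}" hence "t > 0" by simp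
    thus "continuous (at t within {0<..}) (coefB r)" using dB
      by (blast intro: DERIV_continuous continuous_at_imp_continuous_at_within)
  qed
  thus "continuous_on {t0..t1} (coefB r)" using pos continuous_on_subset by blast
  show "\<And>t. t \<in> {t0..t1} \<Longrightarrow> r t > 1" using pos r_gt1 by auto
  have int: "t \<in> interior I" if "t0 < t" "t < t1" for t
  proof -
    have "{t0<..<t1} \<subseteq> interior I" using sub by (intro interior_maximal) auto
    thus ?thesis using that by auto
  qed
  show "\<And>t. t0 < t \<Longrightarrow> t < t1 \<Longrightarrow> (fp has_real_derivative
                 (fp t / coefA r t * (1 - (coefA r t)^2 / (coefB r t)^2 - fp t)
                  + (fm t)^2 * coefA r t / (coefB r t)^2)) (at t)"
  proof -
    fix t assume tt: "t0 < t" "t < t1"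
    hence "t \<in> I" using sub by auto
    thus "(fp has_real_derivative
                 (fp t / coefA r t * (1 - (coefA r t)^2 / (coefB r t)^2 - fp t)
                  + (fm t)^2 * coefA r t / (coefB r t)^2)) (at t)"
      using dp at_within_interior[OF int[OF tt]] by auto
  qed
  show "\<And>t. t0 < t \<Longrightarrow> t < t1 \<Longrightarrow> (fm has_real_derivative
                 (2 * fm t / coefA r t * (fp t - 1))) (at t)"
  proof -
    fix t assume tt: "t0 < t" "t < t1"
    hence "t \<in> I" using sub by auto
    thus "(fm has_real_derivative
                 (2 * fm t / coefA r t * (fp t - 1))) (at t)"
      using dm at_within_interior[OF int[OF tt]] by auto
  qed
qed


lemma Fp_eq:
  assumes "r t > 1"
  shows "(fm t)^2 * coefA r t / (coefB r t)^2 = (fm t)^2 * ((coefA r t)^2/(coefB r t)^2) / coefA r t"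
  using coef_facts(5)[of r t, OF assms] by (metis times_divide_eq_right)

lemma L_neg: fixes X Y Aa :: real shows "-(2*Y/Aa*(X-1)) = 2*(X-1)/Aa*(-Y)"
  by (simp add: divide_inverse algebra_simps)

lemma L_id: fixes X Y Aa :: real shows "2*Y/Aa*(X-1) = 2*(X-1)/Aa*Y"
  by (simp add: divide_inverse algebra_simps)

lemma inv_Hplus:
  assumes r_gt1: "\<forall>t>0. r t > 1"
    and dA: "\<forall>t>0. ((coefA r) has_real_derivative
                 (1/2 * (1 - (coefA r t)^2 / (coefB r t)^2))) (at t)"
    and dB: "\<forall>t>0. ((coefB r) has_real_derivative (coefA r t / coefB r t)) (at t)"
  shows "forward_invariant r H_plus"
  unfolding forward_invariant_def H_plus_def
proof (intro allI impI)
  fix I fp fm t0 t1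
  assume sol: "instanton_solution r I fp fm" and t0: "t0 \<in> I" and t1: "t1 \<in> I"
    and le: "t0 \<le> t1" and st: "(fp t0, fm t0) \<in> {(fp, fm). 0 < fm}"
  note F = setup_facts[OF r_gt1 dA dB sol t0 t1]
  have Anz: "\<forall>t\<in>{t0..t1}. coefA r t \<noteq> 0" using F(5) coef_facts(1) by (metis less_irrefl)
  have "\<forall>k\<in>{fm}. k t1 > 0"
  proof (rule barrier[OF le])
    fix k assume "k \<in> {fm}" hence k: "k = fm" by simp
    show "continuous_on {t0..t1} k" using F(2) k by simp
    show "k t0 > 0" using st k by simp
    show "\<exists>g. continuous_on {t0..t1} g \<and>
        (\<forall>t. t0 < t \<longrightarrow> t < t1 \<longrightarrow> (\<forall>j\<in>{fm}. j t > 0) \<longrightarrow>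
            (\<exists>d. (k has_real_derivative d) (at t) \<and> d \<ge> g t * k t))"
    proof (rule exI[where x="\<lambda>t. 2 * (fp t - 1) / coefA r t"], intro conjI allI impI)
      show "continuous_on {t0..t1} (\<lambda>t. 2 * (fp t - 1) / coefA r t)"
        using Anz by (intro continuous_intros F(1,3)) auto
      fix t assume tt: "t0 < t" "t < t1"
      have D: "(k has_real_derivative (2 * fm t / coefA r t * (fp t - 1))) (at t)"
        using F(7)[OF tt] k by simp
      have E: "2 * fm t / coefA r t * (fp t - 1) \<ge> 2 * (fp t - 1) / coefA r t * k t"
        unfolding k L_id[of "fm t" "coefA r t" "fp t"] by simp
      show "\<exists>d. (k has_real_derivative d) (at t) \<and> d \<ge> (\<lambda>t. 2 * (fp t - 1) / coefA r t) t * k t"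
        using D E by auto
    qed
  qed simp
  thus "(fp t1, fm t1) \<in> {(fp, fm). 0 < fm}" by simp
qed

lemma inv_Hminus:
  assumes r_gt1: "\<forall>t>0. r t > 1"
    and dA: "\<forall>t>0. ((coefA r) has_real_derivative
                 (1/2 * (1 - (coefA r t)^2 / (coefB r t)^2))) (at t)"
    and dB: "\<forall>t>0. ((coefB r) has_real_derivative (coefA r t / coefB r t)) (at t)"
  shows "forward_invariant r H_minus"
  unfolding forward_invariant_def H_minus_def
proof (intro allI impI)
  fix I fp fm t0 t1
  assume sol: "instanton_solution r I fp fm" and t0: "t0 \<in> I" and t1: "t1 \<in> I"
    and le: "t0 \<le> t1" and st: "(fp t0, fm t0) \<in> {(fp, fm). fm < 0}"
  note F = setup_facts[OF r_gt1 dA dB sol t0 t1]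
  have Anz: "\<forall>t\<in>{t0..t1}. coefA r t \<noteq> 0" using F(5) coef_facts(1) by (metis less_irrefl)
  have "\<forall>k\<in>{\<lambda>t. - fm t}. k t1 > 0"
  proof (rule barrier[OF le])
    fix k assume "k \<in> {\<lambda>t. - fm t}" hence k: "k = (\<lambda>t. - fm t)" by simp
    show "continuous_on {t0..t1} k" using F(2) k by (simp add: continuous_on_minus)
    show "k t0 > 0" using st k by simp
    show "\<exists>g. continuous_on {t0..t1} g \<and>
        (\<forall>t. t0 < t \<longrightarrow> t < t1 \<longrightarrow> (\<forall>j\<in>{\<lambda>t. - fm t}. j t > 0) \<longrightarrow>
            (\<exists>d. (k has_real_derivative d) (at t) \<and> d \<ge> g t * k t))"
    proof (rule exI[where x="\<lambda>t. 2 * (fp t - 1) / coefA r t"], intro conjI allI impI)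
      show "continuous_on {t0..t1} (\<lambda>t. 2 * (fp t - 1) / coefA r t)"
        using Anz by (intro continuous_intros F(1,3)) auto
      fix t assume tt: "t0 < t" "t < t1"
      have D: "(k has_real_derivative (- (2 * fm t / coefA r t * (fp t - 1)))) (at t)"
        using DERIV_minus[OF F(7)[OF tt]] k by simp
      have E: "- (2 * fm t / coefA r t * (fp t - 1)) \<ge> 2 * (fp t - 1) / coefA r t * k t"
        unfolding k L_neg[of "fm t" "coefA r t" "fp t"] by simp
      show "\<exists>d. (k has_real_derivative d) (at t) \<and> d \<ge> (\<lambda>t. 2 * (fp t - 1) / coefA r t) t * k t"
        using D E by auto
    qed
  qed simp
  thus "(fp t1, fm t1) \<in> {(fp, fm). fm < 0}" by simp
qed

lemma inv_Rinf:
  assumes r_gt1: "\<forall>t>0. r t > 1"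
    and dA: "\<forall>t>0. ((coefA r) has_real_derivative
                 (1/2 * (1 - (coefA r t)^2 / (coefB r t)^2))) (at t)"
    and dB: "\<forall>t>0. ((coefB r) has_real_derivative (coefA r t / coefB r t)) (at t)"
  shows "forward_invariant r R_infty"
  unfolding forward_invariant_def R_infty_def
proof (intro allI impI)
  fix I fp fm t0 t1
  assume sol: "instanton_solution r I fp fm" and t0: "t0 \<in> I" and t1: "t1 \<in> I"
    and le: "t0 \<le> t1" and st: "(fp t0, fm t0) \<in> {(fp, fm). fp > 1 \<and> fm > 1}"
  note F = setup_facts[OF r_gt1 dA dB sol t0 t1]
  have Anz: "\<forall>t\<in>{t0..t1}. coefA r t \<noteq> 0" using F(5) coef_facts(1) by (metis less_irrefl)
  have Bnz: "\<forall>t\<in>{t0..t1}. coefB r t \<noteq> 0" using F(5) coef_facts(2) by (metis less_irrefl)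
  let ?K = "{\<lambda>t. fp t - 1, \<lambda>t. fm t - 1}"
  have "\<forall>k\<in>?K. k t1 > 0"
  proof (rule barrier[OF le])
    fix k assume "k \<in> ?K" hence k: "k = (\<lambda>t. fp t - 1) \<or> k = (\<lambda>t. fm t - 1)" by simp
    show "continuous_on {t0..t1} k" using k by (auto intro!: continuous_intros F(1,2))
    show "k t0 > 0" using st k by auto
    show "\<exists>g. continuous_on {t0..t1} g \<and>
        (\<forall>t. t0 < t \<longrightarrow> t < t1 \<longrightarrow> (\<forall>j\<in>?K. j t > 0) \<longrightarrow>
            (\<exists>d. (k has_real_derivative d) (at t) \<and> d \<ge> g t * k t))"
      using k
    proof
      assume k: "k = (\<lambda>t. fp t - 1)"
      show ?thesis
      proof (rule exI[where x="\<lambda>t. (-(fp t + (coefA r t)^2/(coefB r t)^2)) / coefA r t"], intro conjI allI impI)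
        show "continuous_on {t0..t1} (\<lambda>t. (-(fp t + (coefA r t)^2/(coefB r t)^2)) / coefA r t)"
          using Anz Bnz by (intro continuous_intros F(1,3,4)) auto
        fix t assume tt: "t0 < t" "t < t1" and pos: "\<forall>j\<in>?K. j t > 0"
        have r1: "r t > 1" using F(5) tt by auto
        have Y: "(fm t)^2 \<ge> 1" using pos by (simp add: one_le_power)
        have D: "(k has_real_derivative (fp t / coefA r t * (1 - (coefA r t)^2 / (coefB r t)^2 - fp t)
                  + (fm t)^2 * coefA r t / (coefB r t)^2)) (at t)"
          using DERIV_diff[OF F(6)[OF tt] DERIV_const[of 1]] k by simp
        have E: "(fp t / coefA r t * (1 - (coefA r t)^2 / (coefB r t)^2 - fp t)
                  + (fm t)^2 * coefA r t / (coefB r t)^2)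
             \<ge> (-(fp t + (coefA r t)^2/(coefB r t)^2)) / coefA r t * k t"
          unfolding Fp_eq[of r t fm, OF r1] k
          using L_inf1[OF coef_facts(1)[of r t, OF r1] coef_facts(3)[of r t, OF r1] Y, of "fp t"]
          by simp
        show "\<exists>d. (k has_real_derivative d) (at t) \<and>
           d \<ge> (\<lambda>t. (-(fp t + (coefA r t)^2/(coefB r t)^2)) / coefA r t) t * k t"
          using D E by auto
      qed
    next
      assume k: "k = (\<lambda>t. fm t - 1)"
      show ?thesis
      proof (rule exI[where x="\<lambda>t. 0"], intro conjI allI impI)
        show "continuous_on {t0..t1} (\<lambda>t. 0)" by simp
        fix t assume tt: "t0 < t" "t < t1" and pos: "\<forall>j\<in>?K. j t > 0"
        have r1: "r t > 1" using F(5) tt by auto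
        have A: "coefA r t > 0" by (rule coef_facts(1)[of r t, OF r1])
        have D: "(k has_real_derivative (2 * fm t / coefA r t * (fp t - 1))) (at t)"
          using DERIV_diff[OF F(7)[OF tt] DERIV_const[of 1]] k by simp
        have E: "2 * fm t / coefA r t * (fp t - 1) \<ge> 0" using pos A by simp
        show "\<exists>d. (k has_real_derivative d) (at t) \<and> d \<ge> (\<lambda>t. 0) t * k t"
          using D E by auto
      qed
    qed
  qed simp
  thus "(fp t1, fm t1) \<in> {(fp, fm). fp > 1 \<and> fm > 1}" by simp
qed

lemma inv_Rzero:
  assumes r_gt1: "\<forall>t>0. r t > 1"
    and dA: "\<forall>t>0. ((coefA r) has_real_derivative
                 (1/2 * (1 - (coefA r t)^2 / (coefB r t)^2))) (at t)"
    and dB: "\<forall>t>0. ((coefB r) has_real_derivative (coefA r t / coefB r t)) (at t)"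
  shows "forward_invariant r R_zero"
  unfolding forward_invariant_def R_zero_def
proof (intro allI impI)
  fix I fp fm t0 t1
  assume sol: "instanton_solution r I fp fm" and t0: "t0 \<in> I" and t1: "t1 \<in> I"
    and le: "t0 \<le> t1" and st: "(fp t0, fm t0) \<in> {(fp, fm). 2/3 < fp \<and> fp < 1 \<and> 0 < fm \<and> fm < 1}"
  note F = setup_facts[OF r_gt1 dA dB sol t0 t1]
  have Anz: "\<forall>t\<in>{t0..t1}. coefA r t \<noteq> 0" using F(5) coef_facts(1) by (metis less_irrefl)
  have Bnz: "\<forall>t\<in>{t0..t1}. coefB r t \<noteq> 0" using F(5) coef_facts(2) by (metis less_irrefl)
  let ?K = "{\<lambda>t. fp t - 2/3, \<lambda>t. 1 - fp t, fm, \<lambda>t. 1 - fm t}"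
  have "\<forall>k\<in>?K. k t1 > 0"
  proof (rule barrier[OF le])
    fix k assume "k \<in> ?K"
    hence k: "k = (\<lambda>t. fp t - 2/3) \<or> k = (\<lambda>t. 1 - fp t) \<or> k = fm \<or> k = (\<lambda>t. 1 - fm t)" by simp
    show "continuous_on {t0..t1} k" using k by (auto intro!: continuous_intros F(1,2))
    show "k t0 > 0" using st k by auto
    show "\<exists>g. continuous_on {t0..t1} g \<and>
        (\<forall>t. t0 < t \<longrightarrow> t < t1 \<longrightarrow> (\<forall>j\<in>?K. j t > 0) \<longrightarrow>
            (\<exists>d. (k has_real_derivative d) (at t) \<and> d \<ge> g t * k t))"
      using k
    proof (elim disjE)
      assume k: "k = (\<lambda>t. fp t - 2/3)"
      show ?thesis
      proof (rule exI[where x="\<lambda>t. (1/3 - (coefA r t)^2/(coefB r t)^2 - fp t) / coefA r t"], intro conjI allI impI)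
        show "continuous_on {t0..t1} (\<lambda>t. (1/3 - (coefA r t)^2/(coefB r t)^2 - fp t) / coefA r t)"
          using Anz Bnz by (intro continuous_intros F(1,3,4)) auto
        fix t assume tt: "t0 < t" "t < t1" and pos: "\<forall>j\<in>?K. j t > 0"
        have r1: "r t > 1" using F(5) tt by auto
        have D: "(k has_real_derivative (fp t / coefA r t * (1 - (coefA r t)^2 / (coefB r t)^2 - fp t)
                  + (fm t)^2 * coefA r t / (coefB r t)^2)) (at t)"
          using DERIV_diff[OF F(6)[OF tt] DERIV_const[of "2/3"]] k by simp
        have E: "(fp t / coefA r t * (1 - (coefA r t)^2 / (coefB r t)^2 - fp t)
                  + (fm t)^2 * coefA r t / (coefB r t)^2)
             \<ge> (1/3 - (coefA r t)^2/(coefB r t)^2 - fp t) / coefA r t * k t"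
          unfolding Fp_eq[of r t fm, OF r1] k
          using L_z[OF coef_facts(1)[of r t, OF r1] coef_facts(3)[of r t, OF r1]
              less_imp_le[OF coef_facts(4)[of r t, OF r1]], of "fp t" "fm t"]
          by simp
        show "\<exists>d. (k has_real_derivative d) (at t) \<and>
           d \<ge> (\<lambda>t. (1/3 - (coefA r t)^2/(coefB r t)^2 - fp t) / coefA r t) t * k t"
          using D E by auto
      qed
    next
      assume k: "k = (\<lambda>t. 1 - fp t)"
      show ?thesis
      proof (rule exI[where x="\<lambda>t. (- fp t - (coefA r t)^2/(coefB r t)^2) / coefA r t"], intro conjI allI impI)
        show "continuous_on {t0..t1} (\<lambda>t. (- fp t - (coefA r t)^2/(coefB r t)^2) / coefA r t)"
          using Anz Bnz by (intro continuous_intros F(1,3,4)) auto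
        fix t assume tt: "t0 < t" "t < t1" and pos: "\<forall>j\<in>?K. j t > 0"
        have r1: "r t > 1" using F(5) tt by auto
        have Y: "(fm t)^2 \<le> 1" using pos by (simp add: power_le_one)
        have D: "(k has_real_derivative (- (fp t / coefA r t * (1 - (coefA r t)^2 / (coefB r t)^2 - fp t)
                  + (fm t)^2 * coefA r t / (coefB r t)^2))) (at t)"
          using DERIV_diff[OF DERIV_const[of 1] F(6)[OF tt]] k by simp
        have E: "- (fp t / coefA r t * (1 - (coefA r t)^2 / (coefB r t)^2 - fp t)
                  + (fm t)^2 * coefA r t / (coefB r t)^2)
             \<ge> (- fp t - (coefA r t)^2/(coefB r t)^2) / coefA r t * k t"
          unfolding Fp_eq[of r t fm, OF r1] k
          using L_w[OF coef_facts(1)[of r t, OF r1] coef_facts(3)[of r t, OF r1] Y, of "fp t"]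
          by simp
        show "\<exists>d. (k has_real_derivative d) (at t) \<and>
           d \<ge> (\<lambda>t. (- fp t - (coefA r t)^2/(coefB r t)^2) / coefA r t) t * k t"
          using D E by auto
      qed
    next
      assume k: "k = fm"
      show ?thesis
      proof (rule exI[where x="\<lambda>t. 2 * (fp t - 1) / coefA r t"], intro conjI allI impI)
        show "continuous_on {t0..t1} (\<lambda>t. 2 * (fp t - 1) / coefA r t)"
          using Anz by (intro continuous_intros F(1,3)) auto
        fix t assume tt: "t0 < t" "t < t1"
        have D: "(k has_real_derivative (2 * fm t / coefA r t * (fp t - 1))) (at t)"
          using F(7)[OF tt] k by simp
        have E: "2 * fm t / coefA r t * (fp t - 1) \<ge> 2 * (fp t - 1) / coefA r t * k t"
          unfolding k L_id[of "fm t" "coefA r t" "fp t"] by simp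
        show "\<exists>d. (k has_real_derivative d) (at t) \<and> d \<ge> (\<lambda>t. 2 * (fp t - 1) / coefA r t) t * k t"
          using D E by auto
      qed
    next
      assume k: "k = (\<lambda>t. 1 - fm t)"
      show ?thesis
      proof (rule exI[where x="\<lambda>t. 0"], intro conjI allI impI)
        show "continuous_on {t0..t1} (\<lambda>t. 0)" by simp
        fix t assume tt: "t0 < t" "t < t1" and pos: "\<forall>j\<in>?K. j t > 0"
        have r1: "r t > 1" using F(5) tt by auto
        have A: "coefA r t > 0" by (rule coef_facts(1)[of r t, OF r1])
        have "2 * fm t / coefA r t * (fp t - 1) \<le> 0"
          using pos A by (intro mult_nonneg_nonpos) auto
        hence E: "- (2 * fm t / coefA r t * (fp t - 1)) \<ge> 0" by simp
        have D: "(k has_real_derivative (- (2 * fm t / coefA r t * (fp t - 1)))) (at t)"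
          using DERIV_diff[OF DERIV_const[of 1] F(7)[OF tt]] k by simp
        show "\<exists>d. (k has_real_derivative d) (at t) \<and> d \<ge> (\<lambda>t. 0) t * k t"
          using D E by auto
      qed
    qed
  qed simp
  thus "(fp t1, fm t1) \<in> {(fp, fm). 2/3 < fp \<and> fp < 1 \<and> 0 < fm \<and> fm < 1}" by simp
qed

theorem mainTheorem3:
  fixes r :: "real \<Rightarrow> real"
  assumes r_gt1: "\<forall>t>0. r t > 1"
    and dA: "\<forall>t>0. ((coefA r) has_real_derivative
                 (1/2 * (1 - (coefA r t)^2 / (coefB r t)^2))) (at t)"
    and dB: "\<forall>t>0. ((coefB r) has_real_derivative (coefA r t / coefB r t)) (at t)"
    and r_lim: "(r \<longlongrightarrow> 1) (at_right 0)"
  shows "forward_invariant r H_plus \<and> forward_invariant r H_minus \<and>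
         forward_invariant r R_infty \<and> forward_invariant r R_zero"
  using inv_Hplus[OF assms(1-3)] inv_Hminus[OF assms(1-3)] inv_Rinf[OF assms(1-3)]
    inv_Rzero[OF assms(1-3)] by blast

end
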